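(* Suppose that for every $i\in\mathcal N$ and every $Z\in\mathcal X$, the function $c\mapsto U_i(Z+c)$ on $\mathbb R$ is continuous, strictly increasing, and satisfies $\lim_{c\to\infty}U_i(Z+c)=\infty$, and that each $U_i$ is monotone and concave. Then $\mathcal{CPO}=\bigcup_{\lambda\in\Lambda}\mathcal{CS}_\lambda$.
   Context: Let $(\Omega,\mathcal F,\mathbb P)$ be an atomless probability space and $\mathcal X:=L^\infty(\Omega,\mathcal F,\mathbb P)$. There are $n\in\mathbb N$ agents indexed by $\mathcal N=\{1,\dots,n\}$ (with $n\ge 2$), agent $i$ having initial endowment $X_i\in\mathcal X$; the aggregate endowment is $S:=\sum_{i=1}^n X_i$. The set of allocations is $\mathcal A:=\{(Y_1,\dots,Y_n)\in\mathcal X^n:\sum_{i=1}^nY_i=S\}$. Each agent $i$ has a utility functional $U_i:\mathcal X\to\mathbb R$. An allocation $(Y_i)\in\mathcal A$ is individually rational (IR) if $U_i(Y_i)\ge U_i(X_i)$ for all $i$; $\mathcal{IR}$ denotes the set of IR allocations. A random vector $(Z_1,\dots,Z_n)$ is comonotone if $(Z_i(\omega_1)-Z_i(\omega_2))(Z_j(\omega_1)-Z_j(\omega_2))\ge0$ for all $\omega_1,\omega_2\in\Omega$ and all $i,j$. $\mathcal A_C$ denotes the set of comonotone allocations in $\mathcal A$. An allocation $(Y_i^* )\in\mathcal A_C$ is comonotone Pareto optimal (CPO) if it is IR and there is no other IR allocation $(Y_i)\in\mathcal A_C$ with $U_i(Y_i)\ge U_i(Y_i^* )$ for all $i$ and at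 least one strict inequality; $\mathcal{CPO}$ denotes the set of CPO allocations. $U$ is monotone if $Z_1\le Z_2$ implies $U(Z_1)\le U(Z_2)$. Let $\Lambda:=\mathbb R_+^n\setminus\{0\}$, and for $\lambda\in\Lambda$ let $\mathcal{CS}_\lambda$ be the set of maximizers (possibly empty) of $\sup_{(Y_i)\in\mathcal{IR}\cap\mathcal A_C}\sum_{i=1}^n\lambda_iU_i(Y_i)$. *)

theory Defs
  imports "HOL-Probability.Probability"
begin

definition atomless :: "'a measure \<Rightarrow> bool" where
  "atomless M \<longleftrightarrow> (\<forall>A\<in>sets M. measure M A > 0 \<longrightarrow>
      (\<exists>B\<in>sets M. B \<subseteq> A \<and> 0 < measure M B \<and> measure M B < measure M A))"

text \<open>Bounded random variables; representatives normalised to 0 off the sample space.\<close>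
definition Lspace :: "'a measure \<Rightarrow> ('a \<Rightarrow> real) set" where
  "Lspace M = {Z. Z \<in> borel_measurable M \<and> bounded (Z ` space M) \<and> (\<forall>\<omega>. \<omega> \<notin> space M \<longrightarrow> Z \<omega> = 0)}"

definition shift :: "'a measure \<Rightarrow> ('a \<Rightarrow> real) \<Rightarrow> real \<Rightarrow> ('a \<Rightarrow> real)" where
  "shift M Z c = (\<lambda>\<omega>. if \<omega> \<in> space M then Z \<omega> + c else 0)"

definition aggregate :: "nat \<Rightarrow> (nat \<Rightarrow> 'a \<Rightarrow> real) \<Rightarrow> 'a \<Rightarrow> real" where
  "aggregate n X = (\<lambda>\<omega>. \<Sum>i=1..n. X i \<omega>)"

definition allocations :: "'a measure \<Rightarrow> nat \<Rightarrow> (nat \<Rightarrow> 'a \<Rightarrow> real) \<Rightarrow> (nat \<Rightarrow> 'a \<Rightarrow> real) set" where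
  "allocations M n X = {Y \<in> {1..n} \<rightarrow>\<^sub>E Lspace M. aggregate n Y = aggregate n X}"

definition IR :: "'a measure \<Rightarrow> nat \<Rightarrow> (nat \<Rightarrow> ('a \<Rightarrow> real) \<Rightarrow> real) \<Rightarrow> (nat \<Rightarrow> 'a \<Rightarrow> real)
    \<Rightarrow> (nat \<Rightarrow> 'a \<Rightarrow> real) set" where
  "IR M n U X = {Y \<in> allocations M n X. \<forall>i\<in>{1..n}. U i (Y i) \<ge> U i (X i)}"

definition comonotone :: "'a measure \<Rightarrow> nat \<Rightarrow> (nat \<Rightarrow> 'a \<Rightarrow> real) \<Rightarrow> bool" where
  "comonotone M n Y \<longleftrightarrow> (\<forall>i\<in>{1..n}. \<forall>j\<in>{1..n}. \<forall>\<omega>1\<in>space M. \<forall>\<omega>2\<in>space M.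
      (Y i \<omega>1 - Y i \<omega>2) * (Y j \<omega>1 - Y j \<omega>2) \<ge> 0)"

definition comon_allocations :: "'a measure \<Rightarrow> nat \<Rightarrow> (nat \<Rightarrow> 'a \<Rightarrow> real) \<Rightarrow> (nat \<Rightarrow> 'a \<Rightarrow> real) set" where
  "comon_allocations M n X = {Y \<in> allocations M n X. comonotone M n Y}"

definition CPO :: "'a measure \<Rightarrow> nat \<Rightarrow> (nat \<Rightarrow> ('a \<Rightarrow> real) \<Rightarrow> real) \<Rightarrow> (nat \<Rightarrow> 'a \<Rightarrow> real)
    \<Rightarrow> (nat \<Rightarrow> 'a \<Rightarrow> real) set" where
  "CPO M n U X = {Ys \<in> comon_allocations M n X. Ys \<in> IR M n U X \<and>
      \<not> (\<exists>Y \<in> IR M n U X \<inter> comon_allocations M n X.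
            (\<forall>i\<in>{1..n}. U i (Y i) \<ge> U i (Ys i)) \<and> (\<exists>i\<in>{1..n}. U i (Y i) > U i (Ys i)))}"

definition Lambda :: "nat \<Rightarrow> (nat \<Rightarrow> real) set" where
  "Lambda n = {l \<in> {1..n} \<rightarrow>\<^sub>E {0..}. \<exists>i\<in>{1..n}. l i \<noteq> 0}"

definition CS :: "'a measure \<Rightarrow> nat \<Rightarrow> (nat \<Rightarrow> ('a \<Rightarrow> real) \<Rightarrow> real) \<Rightarrow> (nat \<Rightarrow> 'a \<Rightarrow> real)
    \<Rightarrow> (nat \<Rightarrow> real) \<Rightarrow> (nat \<Rightarrow> 'a \<Rightarrow> real) set" where
  "CS M n U X l = {Ys \<in> IR M n U X \<inter> comon_allocations M n X.
      \<forall>Y \<in> IR M n U X \<inter> comon_allocations M n X.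
         (\<Sum>i=1..n. l i * U i (Y i)) \<le> (\<Sum>i=1..n. l i * U i (Ys i))}"

definition concave_fun :: "'a measure \<Rightarrow> (('a \<Rightarrow> real) \<Rightarrow> real) \<Rightarrow> bool" where
  "concave_fun M V \<longleftrightarrow> (\<forall>Z1\<in>Lspace M. \<forall>Z2\<in>Lspace M. \<forall>t::real. 0 \<le> t \<longrightarrow> t \<le> 1 \<longrightarrow>
      V (\<lambda>\<omega>. t * Z1 \<omega> + (1 - t) * Z2 \<omega>) \<ge> t * V Z1 + (1 - t) * V Z2)"

definition monotone_fun :: "'a measure \<Rightarrow> (('a \<Rightarrow> real) \<Rightarrow> real) \<Rightarrow> bool" where
  "monotone_fun M V \<longleftrightarrow> (\<forall>Z1\<in>Lspace M. \<forall>Z2\<in>Lspace M.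
      (\<forall>\<omega>\<in>space M. Z1 \<omega> \<le> Z2 \<omega>) \<longrightarrow> V Z1 \<le> V Z2)"

text \<open>A functional on L-infinity: it does not distinguish a.s. equal representatives.\<close>
definition ae_invariant :: "'a measure \<Rightarrow> (('a \<Rightarrow> real) \<Rightarrow> real) \<Rightarrow> bool" where
  "ae_invariant M V \<longleftrightarrow> (\<forall>Z1\<in>Lspace M. \<forall>Z2\<in>Lspace M.
      (AE \<omega> in M. Z1 \<omega> = Z2 \<omega>) \<longrightarrow> V Z1 = V Z2)"

end

theory Submission
  imports Defs
begin


lemma key2:
  fixes T :: "(real \<times> real) set"
  assumes dc: "\<And>p q t. p\<in>T \<Longrightarrow> q\<in>T \<Longrightarrow> 0\<le>t \<Longrightarrow> t\<le>1 \<Longrightarrow>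
      \<exists>r\<in>T. fst r \<ge> t* fst p + (1-t)* fst q \<and> snd r \<ge> t* snd p+(1-t)* snd q"
  and np: "\<And>p. p\<in>T \<Longrightarrow> \<not>(fst p > 0 \<and> snd p > 0)"
  and p: "p \<in> T" "fst p > 0" and q: "q \<in> T" "snd q > 0"
  shows "fst p * snd q \<le> fst q * snd p"
proof (rule ccontr)
  define a1 where "a1 = fst p"
  define b1 where "b1 = snd p"
  define a2 where "a2 = fst q"
  define b2 where "b2 = snd q"
  assume "\<not> ?thesis"
  then have D: "a1*b2 - a2*b1 > 0" unfolding a1_def b1_def a2_def b2_def by simp
  define D where "D = a1*b2 - a2*b1"
  have b1: "b1 \<le> 0" using np[OF p(1)] p(2) unfolding a1_def b1_def by auto
  have a2: "a2 \<le> 0" using np[OF q(1)] q(2) unfolding a2_def b2_def by auto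
  have b2: "b2 > 0" using q(2) b2_def by simp
  define w1 where "w1 = b2*(1-a2)"
  define w2 where "w2 = -b1*(1-a2) + D"
  have w1: "w1 > 0" unfolding w1_def using a2 b2 by simp
  have w2: "w2 > 0" proof -
    have "0 \<le> (-b1)*(1-a2)" using a2 b1 mult_nonneg_nonneg[of "-b1" "1-a2"] by auto
    then show ?thesis using D D_def unfolding w2_def by simp
  qed
  have e1: "w1*a1 + w2*a2 = D" unfolding w1_def w2_def D_def by (simp add: algebra_simps)
  have e2: "w1*b1 + w2*b2 = D*b2" unfolding w1_def w2_def D_def by (simp add: algebra_simps)
  define t where "t = w1/(w1+w2)"
  have t: "0 \<le> t" "t \<le> 1" using w1 w2 unfolding t_def by auto
  have f1: "t*a1+(1-t)*a2 = (w1*a1+w2*a2)/(w1+w2)" proof -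
    have "w1+w2 \<noteq> 0" using w1 w2 by simp
    then have "1 - t = w2/(w1+w2)" unfolding t_def by (simp add: field_simps)
    then show ?thesis unfolding t_def by (simp add: add_divide_distrib)
  qed
  have f2: "t*b1+(1-t)*b2 = (w1*b1+w2*b2)/(w1+w2)" proof -
    have "w1+w2 \<noteq> 0" using w1 w2 by simp
    then have "1 - t = w2/(w1+w2)" unfolding t_def by (simp add: field_simps)
    then show ?thesis unfolding t_def by (simp add: add_divide_distrib)
  qed
  obtain r where r: "r\<in>T" "fst r \<ge> t*a1+(1-t)*a2" "snd r \<ge> t*b1+(1-t)*b2"
    using dc[OF p(1) q(1) t] unfolding a1_def b1_def a2_def b2_def by blast
  have "fst r > 0" using r(2) f1 e1 D D_def w1 w2 by (smt (verit) divide_pos_pos)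
  moreover have "snd r > 0" using r(3) f2 e2 D D_def w1 w2 b2
    by (smt (verit) divide_pos_pos mult_pos_pos)
  ultimately show False using np[OF r(1)] by simp
qed

lemma sep2:
  fixes T :: "(real \<times> real) set"
  assumes dc: "\<And>p q t. p\<in>T \<Longrightarrow> q\<in>T \<Longrightarrow> 0\<le>t \<Longrightarrow> t\<le>1 \<Longrightarrow>
      \<exists>r\<in>T. fst r \<ge> t* fst p + (1-t)* fst q \<and> snd r \<ge> t* snd p+(1-t)* snd q"
  and np: "\<And>p. p\<in>T \<Longrightarrow> \<not>(fst p > 0 \<and> snd p > 0)"
  shows "\<exists>\<alpha> \<beta>. 0\<le>\<alpha> \<and> 0\<le>\<beta> \<and> \<alpha>+\<beta>=1 \<and> (\<forall>p\<in>T. \<alpha>* fst p + \<beta>* snd p \<le> 0)"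
proof (cases "\<forall>p\<in>T. fst p \<le> 0")
  case True then show ?thesis by (intro exI[of _ 1] exI[of _ 0]) auto
next
  case False
  then obtain p0 where p0: "p0 \<in> T" "fst p0 > 0" by force
  show ?thesis
  proof (cases "\<forall>q\<in>T. snd q \<le> 0")
    case True then show ?thesis by (intro exI[of _ 0] exI[of _ 1]) auto
  next
    case False
    then obtain q0 where q0: "q0 \<in> T" "snd q0 > 0" by force
    have neg: "fst q < 0" if "q \<in> T" "snd q > 0" for q
    proof -
      have "fst p0 * snd q \<le> fst q * snd p0" using key2[OF dc np p0 that] by blast
      moreover have "fst p0 * snd q > 0" using p0 that by simp
      moreover have "snd p0 \<le> 0" using np[OF p0(1)] p0(2) by auto
      ultimately show ?thesis by (smt (verit) mult_nonneg_nonpos mult_nonpos_nonpos)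
    qed
    have bnd: "snd q / (- fst q) \<le> - snd p / fst p"
      if "q \<in> T" "snd q > 0" "p \<in> T" "fst p > 0" for p q
    proof -
      have "fst p * snd q \<le> fst q * snd p" using key2[OF dc np that(3,4,1,2)] .
      moreover have "fst q < 0" using neg that by blast
      ultimately show ?thesis using that(4) by (simp add: field_simps)
    qed
    define S where "S = (\<lambda>q. snd q / (- fst q)) ` {q\<in>T. snd q > 0}"
    have Sne: "S \<noteq> {}" using q0 S_def by blast
    have Sbdd: "bdd_above S" unfolding S_def bdd_above_def using bnd p0 by blast
    define r where "r = Sup S"
    have rge: "s \<le> r" if "s \<in> S" for s using cSup_upper[OF that Sbdd] r_def by simp
    have rle: "r \<le> - snd p / fst p" if "p\<in>T" "fst p > 0" for p
      unfolding r_def using Sne by (rule cSup_least) (use bnd that S_def in auto)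
    have r0: "0 \<le> r"
    proof -
      have "snd q0 / (- fst q0) \<in> S" using q0 S_def by blast
      moreover have "snd q0 / (- fst q0) > 0" using q0 neg[OF q0] by (simp add: divide_pos_neg)
      ultimately show ?thesis using rge by force
    qed
    have main: "r * fst p + snd p \<le> 0" if "p \<in> T" for p
    proof (cases "fst p > 0")
      case True
      then have "r \<le> - snd p / fst p" using rle that by blast
      then show ?thesis using True by (simp add: field_simps)
    next
      case F: False
      show ?thesis
      proof (cases "snd p > 0")
        case True
        have "snd p / (- fst p) \<in> S" using that True S_def by blast
        then have "snd p / (- fst p) \<le> r" using rge by blast
        moreover have "fst p < 0" using neg that True by blast
        ultimately show ?thesis by (simp add: field_simps)
      next
        case False then show ?thesis using F r0 by (smt (verit) mult_nonneg_nonpos)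
      qed
    qed
    have A1: "0 \<le> r/(1+r)" using r0 by auto
    have A2: "0 \<le> 1/(1+r)" using r0 by auto
    have A3: "r/(1+r) + 1/(1+r) = 1" using r0 by (simp add: field_simps)
    have A4: "r/(1+r)* fst p + 1/(1+r)* snd p \<le> 0" if "p \<in> T" for p
    proof -
      have "r/(1+r)* fst p + 1/(1+r)* snd p = (r * fst p + snd p)/(1+r)"
      proof -
        have "1+r \<noteq> 0" using r0 by simp
        then show ?thesis by (simp add: add_divide_distrib)
      qed
      also have "\<dots> \<le> 0" using main[OF \<open>p\<in>T\<close>] r0 by (simp add: divide_nonpos_pos)
      finally show "r/(1+r)* fst p + 1/(1+r)* snd p \<le> 0" .
    qed
    show ?thesis using A1 A2 A3 A4 by blast
  qed
qed



lemma sepn: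
  fixes K :: "(nat \<Rightarrow> real) set"
  assumes "finite I" "I \<noteq> {}"
  and "\<And>k1 k2 t. k1\<in>K \<Longrightarrow> k2\<in>K \<Longrightarrow> 0\<le>t \<Longrightarrow> t\<le>1 \<Longrightarrow> \<exists>k\<in>K. \<forall>i\<in>I. k i \<ge> t*k1 i + (1-t)*k2 i"
  and "\<And>k. k\<in>K \<Longrightarrow> \<exists>i\<in>I. k i \<le> 0"
  shows "\<exists>l. (\<forall>i\<in>I. 0 \<le> l i) \<and> sum l I = 1 \<and> (\<forall>k\<in>K. (\<Sum>i\<in>I. l i * k i) \<le> 0)"
  using assms(1,2,3,4)
proof (induction I arbitrary: K rule: finite_ne_induct)
  case (singleton j)
  show ?case by (intro exI[of _ "\<lambda>_. 1"]) (use singleton.prems(2) in auto)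
next
  case (insert j I K)
  define K' where "K' = {k\<in>K. k j > 0}"
  have "\<exists>l. (\<forall>i\<in>I. 0 \<le> l i) \<and> sum l I = 1 \<and> (\<forall>k\<in>K'. (\<Sum>i\<in>I. l i * k i) \<le> 0)"
  proof (rule insert.IH)
    fix k1 k2 t assume a: "k1\<in>K'" "k2\<in>K'" "0\<le>(t::real)" "t\<le>1"
    then obtain k where k: "k\<in>K" "\<forall>i\<in>insert j I. k i \<ge> t*k1 i + (1-t)*k2 i"
      using insert.prems(1)[of k1 k2 t] K'_def by auto
    have "t*k1 j + (1-t)*k2 j > 0"
    proof (cases "t = 0")
      case True then show ?thesis using a K'_def by auto
    next
      case False
      then have "t*k1 j > 0" using a K'_def by auto
      moreover have "(1-t)*k2 j \<ge> 0" using a K'_def by auto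
      ultimately show ?thesis by linarith
    qed
    then have "k \<in> K'" using k K'_def by force
    then show "\<exists>k\<in>K'. \<forall>i\<in>I. k i \<ge> t*k1 i + (1-t)*k2 i" using k by blast
  next
    fix k assume "k \<in> K'"
    then show "\<exists>i\<in>I. k i \<le> 0" using insert.prems(2)[of k] K'_def by force
  qed
  then obtain m where m: "\<forall>i\<in>I. 0 \<le> m i" "sum m I = 1" "\<forall>k\<in>K'. (\<Sum>i\<in>I. m i * k i) \<le> 0"
    by blast
  define T where "T = (\<lambda>k. ((\<Sum>i\<in>I. m i * k i), k j)) ` K"
  have "\<exists>\<alpha> \<beta>. 0\<le>\<alpha> \<and> 0\<le>\<beta> \<and> \<alpha>+\<beta>=1 \<and> (\<forall>p\<in>T. \<alpha>* fst p + \<beta>* snd p \<le> 0)"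
  proof (rule sep2)
    fix p q and t :: real assume a: "p\<in>T" "q\<in>T" "0\<le>t" "t\<le>1"
    then obtain k1 k2 where k12: "k1\<in>K" "k2 \<in> K" "p = ((\<Sum>i\<in>I. m i * k1 i), k1 j)"
      "q = ((\<Sum>i\<in>I. m i * k2 i), k2 j)" using T_def by auto
    obtain k where k: "k\<in>K" "\<forall>i\<in>insert j I. k i \<ge> t*k1 i + (1-t)*k2 i"
      using insert.prems(1)[OF k12(1,2) a(3,4)] by blast
    have "(\<Sum>i\<in>I. m i * k i) \<ge> (\<Sum>i\<in>I. m i * (t*k1 i + (1-t)*k2 i))"
      using k(2) m(1) by (intro sum_mono mult_left_mono) auto
    also have "(\<Sum>i\<in>I. m i * (t*k1 i + (1-t)*k2 i)) = t*(\<Sum>i\<in>I. m i * k1 i) + (1-t)*(\<Sum>i\<in>I. m i * k2 i)"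
      by (simp add: sum_distrib_left sum.distrib[symmetric] algebra_simps)
    finally show "\<exists>r\<in>T. fst r \<ge> t* fst p + (1-t)* fst q \<and> snd r \<ge> t* snd p+(1-t)* snd q"
      using k k12 T_def by (intro bexI[of _ "((\<Sum>i\<in>I. m i * k i), k j)"]) auto
  next
    fix p assume "p \<in> T"
    then obtain k where k: "k \<in> K" "p = ((\<Sum>i\<in>I. m i * k i), k j)" using T_def by auto
    show "\<not>(fst p > 0 \<and> snd p > 0)"
    proof
      assume "fst p > 0 \<and> snd p > 0"
      then have "k \<in> K'" "(\<Sum>i\<in>I. m i * k i) > 0" using k K'_def by auto
      then show False using m(3) by force
    qed
  qed
  then obtain \<alpha> \<beta> where ab: "0\<le>\<alpha>" "0\<le>\<beta>" "\<alpha>+\<beta>=1" "\<forall>p\<in>T. \<alpha>* fst p + \<beta>* snd p \<le> 0"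
    by blast
  define l where "l = (\<lambda>i. if i = j then \<beta> else \<alpha> * m i)"
  have jI: "j \<notin> I" by fact
  have s1: "(\<Sum>i\<in>I. l i * k i) = \<alpha> * (\<Sum>i\<in>I. m i * k i)" for k :: "nat \<Rightarrow> real"
    unfolding l_def using jI by (auto simp: sum_distrib_left algebra_simps intro!: sum.cong)
  have s2: "sum l I = \<alpha>" using s1[of "\<lambda>_. 1"] m(2) by simp
  show ?case
  proof (intro exI[of _ l] conjI ballI)
    fix i assume "i \<in> insert j I" then show "0 \<le> l i" using ab m(1) l_def by auto
  next
    show "sum l (insert j I) = 1" using insert.hyps s2 ab(3) l_def by simp
  next
    fix k assume "k \<in> K"
    then have "\<alpha> * (\<Sum>i\<in>I. m i * k i) + \<beta> * k j \<le> 0" using ab(4) T_def by auto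
    then show "(\<Sum>i\<in>insert j I. l i * k i) \<le> 0" using insert.hyps s1[of k] l_def by simp
  qed
qed



lemma Lspace_comb:
  assumes "Z1 \<in> Lspace M" "Z2 \<in> Lspace M"
  shows "(\<lambda>\<omega>. t * Z1 \<omega> + (1 - t) * Z2 \<omega>) \<in> Lspace M"
proof -
  obtain B1 where B1: "\<forall>x\<in>Z1 ` space M. norm x \<le> B1" using assms(1) unfolding Lspace_def bounded_iff by auto
  obtain B2 where B2: "\<forall>x\<in>Z2 ` space M. norm x \<le> B2" using assms(2) unfolding Lspace_def bounded_iff by auto
  have "\<forall>x\<in>(\<lambda>\<omega>. t * Z1 \<omega> + (1 - t) * Z2 \<omega>) ` space M. norm x \<le> \<bar>t\<bar>*B1 + \<bar>1-t\<bar>*B2"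
  proof
    fix x assume "x \<in> (\<lambda>\<omega>. t * Z1 \<omega> + (1 - t) * Z2 \<omega>) ` space M"
    then obtain w where w: "w \<in> space M" "x = t * Z1 w + (1 - t) * Z2 w" by auto
    have "\<bar>Z1 w\<bar> \<le> B1" "\<bar>Z2 w\<bar> \<le> B2" using B1 B2 w(1) by auto
    then have "\<bar>t\<bar>*\<bar>Z1 w\<bar> \<le> \<bar>t\<bar>*B1" "\<bar>1-t\<bar>*\<bar>Z2 w\<bar> \<le> \<bar>1-t\<bar>*B2"
      by (auto intro: mult_left_mono)
    moreover have "\<bar>x\<bar> \<le> \<bar>t\<bar>*\<bar>Z1 w\<bar> + \<bar>1-t\<bar>*\<bar>Z2 w\<bar>"
      unfolding w(2) abs_mult[symmetric] by (rule abs_triangle_ineq)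
    ultimately show "norm x \<le> \<bar>t\<bar>*B1 + \<bar>1-t\<bar>*B2" by simp
  qed
  then have "bounded ((\<lambda>\<omega>. t * Z1 \<omega> + (1 - t) * Z2 \<omega>) ` space M)" unfolding bounded_iff by blast
  then show ?thesis using assms unfolding Lspace_def by auto
qed

lemma Lspace_shift:
  assumes "Z \<in> Lspace M"
  shows "shift M Z c \<in> Lspace M"
proof -
  obtain B where B: "\<forall>x\<in>Z ` space M. norm x \<le> B" using assms unfolding Lspace_def bounded_iff by auto
  have "\<forall>x\<in>shift M Z c ` space M. norm x \<le> B + \<bar>c\<bar>"
  proof
    fix x assume "x \<in> shift M Z c ` space M"
    then obtain w where w: "w \<in> space M" "x = Z w + c" by (auto simp: shift_def)
    have "\<bar>Z w\<bar> \<le> B" using B w(1) by auto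
    then show "norm x \<le> B + \<bar>c\<bar>" using w(2) by simp
  qed
  then have b: "bounded (shift M Z c ` space M)" unfolding bounded_iff by blast
  have "(\<lambda>\<omega>. Z \<omega> + c) \<in> borel_measurable M" using assms unfolding Lspace_def by auto
  then have "shift M Z c \<in> borel_measurable M"
    by (rule measurable_cong[THEN iffD1, rotated]) (simp add: shift_def)
  then show ?thesis using b unfolding Lspace_def shift_def by auto
qed

lemma shift0: "Z \<in> Lspace M \<Longrightarrow> shift M Z 0 = Z"
  unfolding Lspace_def shift_def by auto

lemma comon_sign:
  assumes "comonotone M n Y" "w1 \<in> space M" "w2 \<in> space M"
    "(\<Sum>i=1..n. Y i w1) \<ge> (\<Sum>i=1..n. Y i w2)" "i \<in> {1..n}"
  shows "Y i w1 \<ge> Y i w2"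
proof (rule ccontr)
  assume "\<not> ?thesis"
  then have lt: "Y i w1 < Y i w2" by simp
  have le: "Y j w1 \<le> Y j w2" if "j \<in> {1..n}" for j
  proof -
    have "(Y i w1 - Y i w2) * (Y j w1 - Y j w2) \<ge> 0"
      using assms(1-3,5) that unfolding comonotone_def by blast
    then show ?thesis using lt by (smt (verit) mult_neg_pos)
  qed
  have "(\<Sum>j=1..n. Y j w1) < (\<Sum>j=1..n. Y j w2)"
    by (rule sum_strict_mono_ex1) (use le lt assms(5) in auto)
  then show False using assms(4) by simp
qed



lemma agg_eq: "aggregate n Y = aggregate n X \<Longrightarrow> (\<Sum>i=1..n. Y i w) = (\<Sum>i=1..n. X i w)"
  unfolding aggregate_def by (drule fun_cong[of _ _ w]) simp

lemma comb_F:
  assumes conc: "\<forall>i\<in>{1..n}. concave_fun M (U i)"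
    and Y: "Y \<in> IR M n U X \<inter> comon_allocations M n X"
    and Z: "Z \<in> IR M n U X \<inter> comon_allocations M n X"
    and t: "0 \<le> t" "t \<le> 1"
    and W: "W = (\<lambda>i. if i\<in>{1..n} then (\<lambda>\<omega>. t*Y i \<omega> + (1-t)*Z i \<omega>) else undefined)"
  shows "W \<in> IR M n U X \<inter> comon_allocations M n X"
    "\<forall>i\<in>{1..n}. U i (W i) \<ge> t*U i (Y i) + (1-t)*U i (Z i)"
proof -
  have YL: "\<forall>i\<in>{1..n}. Y i \<in> Lspace M" and ZL: "\<forall>i\<in>{1..n}. Z i \<in> Lspace M"
    using Y Z unfolding IR_def allocations_def by auto
  have Yag: "aggregate n Y = aggregate n X" and Zag: "aggregate n Z = aggregate n X"
    using Y Z unfolding IR_def allocations_def by auto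
  have Ycom: "comonotone M n Y" and Zcom: "comonotone M n Z"
    using Y Z unfolding comon_allocations_def by auto
  have YIR: "\<forall>i\<in>{1..n}. U i (Y i) \<ge> U i (X i)" and ZIR: "\<forall>i\<in>{1..n}. U i (Z i) \<ge> U i (X i)"
    using Y Z unfolding IR_def by auto
  show ineq: "\<forall>i\<in>{1..n}. U i (W i) \<ge> t*U i (Y i) + (1-t)*U i (Z i)"
  proof
    fix i assume i: "i \<in> {1..n}"
    then have "W i = (\<lambda>\<omega>. t*Y i \<omega> + (1-t)*Z i \<omega>)" using W by simp
    then show "U i (W i) \<ge> t*U i (Y i) + (1-t)*U i (Z i)"
      using conc i YL ZL t unfolding concave_fun_def by simp
  qed
  have WL: "W \<in> {1..n} \<rightarrow>\<^sub>E Lspace M"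
    using W YL ZL by (auto simp: PiE_def extensional_def intro!: Lspace_comb)
  have Wag: "aggregate n W = aggregate n X"
  proof
    fix w
    have "aggregate n W w = (\<Sum>i=1..n. t*Y i w + (1-t)*Z i w)"
      unfolding aggregate_def W by simp
    also have "\<dots> = t*(\<Sum>i=1..n. Y i w) + (1-t)*(\<Sum>i=1..n. Z i w)"
      by (simp add: sum.distrib sum_distrib_left)
    also have "\<dots> = aggregate n X w" using agg_eq[OF Yag] agg_eq[OF Zag]
      unfolding aggregate_def by (simp add: algebra_simps)
    finally show "aggregate n W w = aggregate n X w" .
  qed
  have WIR: "\<forall>i\<in>{1..n}. U i (W i) \<ge> U i (X i)"
  proof
    fix i assume i: "i \<in> {1..n}"
    have "t*U i (Y i) + (1-t)*U i (Z i) \<ge> t*U i (X i) + (1-t)*U i (X i)"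
      using YIR ZIR i t by (intro add_mono mult_left_mono) auto
    moreover have "U i (W i) \<ge> t*U i (Y i) + (1-t)*U i (Z i)" using ineq i by blast
    ultimately show "U i (W i) \<ge> U i (X i)" by (simp add: algebra_simps)
  qed
  have Wcom: "comonotone M n W"
    unfolding comonotone_def
  proof (intro ballI)
    fix i j w1 w2 assume ij: "i \<in> {1..n}" "j \<in> {1..n}" and w: "w1 \<in> space M" "w2 \<in> space M"
    have eqY: "(\<Sum>k=1..n. Y k w) = (\<Sum>k=1..n. Z k w)" for w using agg_eq[OF Yag] agg_eq[OF Zag] by simp
    show "(W i w1 - W i w2) * (W j w1 - W j w2) \<ge> 0"
    proof (cases "(\<Sum>k=1..n. Y k w1) \<ge> (\<Sum>k=1..n. Y k w2)")
      case True
      then have "(\<Sum>k=1..n. Z k w1) \<ge> (\<Sum>k=1..n. Z k w2)" using eqY by simp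
      then have "\<forall>k\<in>{1..n}. Y k w1 \<ge> Y k w2 \<and> Z k w1 \<ge> Z k w2"
        using comon_sign[OF Ycom w] comon_sign[OF Zcom w] True by blast
      then have "\<forall>k\<in>{1..n}. W k w1 - W k w2 \<ge> 0"
      proof (intro ballI)
        fix k assume "\<forall>k\<in>{1..n}. Y k w1 \<ge> Y k w2 \<and> Z k w1 \<ge> Z k w2" "k \<in> {1..n}"
        then have a: "t*(Y k w1 - Y k w2) \<ge> 0" "(1-t)*(Z k w1 - Z k w2) \<ge> 0" using t by auto
        have "W k w1 - W k w2 = t*(Y k w1 - Y k w2) + (1-t)*(Z k w1 - Z k w2)"
          using W \<open>k \<in> {1..n}\<close> by (simp add: algebra_simps)
        then show "W k w1 - W k w2 \<ge> 0" using a by linarith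
      qed
      then show ?thesis using ij by simp
    next
      case False
      then have F1: "(\<Sum>k=1..n. Y k w2) \<ge> (\<Sum>k=1..n. Y k w1)" by simp
      then have "(\<Sum>k=1..n. Z k w2) \<ge> (\<Sum>k=1..n. Z k w1)" using eqY by simp
      then have "\<forall>k\<in>{1..n}. Y k w2 \<ge> Y k w1 \<and> Z k w2 \<ge> Z k w1"
        using comon_sign[OF Ycom w(2,1)] comon_sign[OF Zcom w(2,1)] F1 by blast
      then have "\<forall>k\<in>{1..n}. W k w1 - W k w2 \<le> 0"
      proof (intro ballI)
        fix k assume "\<forall>k\<in>{1..n}. Y k w2 \<ge> Y k w1 \<and> Z k w2 \<ge> Z k w1" "k \<in> {1..n}"
        then have a: "t*(Y k w2 - Y k w1) \<ge> 0" "(1-t)*(Z k w2 - Z k w1) \<ge> 0" using t by auto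
        have "W k w2 - W k w1 = t*(Y k w2 - Y k w1) + (1-t)*(Z k w2 - Z k w1)"
          using W \<open>k \<in> {1..n}\<close> by (simp add: algebra_simps)
        then show "W k w1 - W k w2 \<le> 0" using a by linarith
      qed
      then show ?thesis using ij by (simp add: mult_nonpos_nonpos)
    qed
  qed
  show "W \<in> IR M n U X \<inter> comon_allocations M n X"
    using WL Wag WIR Wcom unfolding IR_def comon_allocations_def allocations_def by auto
qed



theorem mainTheorem3:
  fixes M :: "'a measure" and n :: nat
    and U :: "nat \<Rightarrow> ('a \<Rightarrow> real) \<Rightarrow> real"
    and X :: "nat \<Rightarrow> 'a \<Rightarrow> real"
  assumes "prob_space M" and "atomless M" and "n \<ge> 2"
    and "\<forall>i\<in>{1..n}. X i \<in> Lspace M"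
    and "\<forall>i\<in>{1..n}. ae_invariant M (U i)"
    and "\<forall>i\<in>{1..n}. \<forall>Z\<in>Lspace M. continuous_on UNIV (\<lambda>c. U i (shift M Z c))"
    and "\<forall>i\<in>{1..n}. \<forall>Z\<in>Lspace M. strict_mono (\<lambda>c. U i (shift M Z c))"
    and "\<forall>i\<in>{1..n}. \<forall>Z\<in>Lspace M. filterlim (\<lambda>c. U i (shift M Z c)) at_top at_top"
    and "\<forall>i\<in>{1..n}. monotone_fun M (U i)"
    and "\<forall>i\<in>{1..n}. concave_fun M (U i)"
  shows "CPO M n U X = (\<Union>l\<in>Lambda n. CS M n U X l)"
proof (intro equalityI subsetI)
  define F where "F = IR M n U X \<inter> comon_allocations M n X"
  fix Ys assume Ys: "Ys \<in> CPO M n U X"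
  then have YsF: "Ys \<in> F" unfolding CPO_def F_def by auto
  have nodom: "\<not> (\<exists>Y\<in>F. (\<forall>i\<in>{1..n}. U i (Y i) \<ge> U i (Ys i)) \<and> (\<exists>i\<in>{1..n}. U i (Y i) > U i (Ys i)))"
    using Ys unfolding CPO_def F_def by auto
  define K where "K = (\<lambda>Y. \<lambda>i. U i (Y i) - U i (Ys i)) ` F"
  have "\<exists>l. (\<forall>i\<in>{1..n}. 0 \<le> l i) \<and> sum l {1..n} = 1 \<and> (\<forall>k\<in>K. (\<Sum>i\<in>{1..n}. l i * k i) \<le> 0)"
  proof (rule sepn)
    show "finite {1..n}" by simp
    show "{1..n} \<noteq> {}" using assms(3) by simp
  next
    fix k1 k2 and t :: real assume a: "k1 \<in> K" "k2 \<in> K" "0 \<le> t" "t \<le> 1"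
    then obtain Y Z where YZ: "Y \<in> F" "Z \<in> F" "k1 = (\<lambda>i. U i (Y i) - U i (Ys i))"
      "k2 = (\<lambda>i. U i (Z i) - U i (Ys i))" unfolding K_def by auto
    define W where "W = (\<lambda>i. if i\<in>{1..n} then (\<lambda>\<omega>. t*Y i \<omega> + (1-t)*Z i \<omega>) else undefined)"
    note c = comb_F[OF assms(10) YZ(1,2)[unfolded F_def] a(3,4) W_def]
    have "(\<lambda>i. U i (W i) - U i (Ys i)) \<in> K" using c(1) unfolding K_def F_def by auto
    moreover have "\<forall>i\<in>{1..n}. (\<lambda>i. U i (W i) - U i (Ys i)) i \<ge> t*k1 i + (1-t)*k2 i"
      using c(2) YZ(3,4) by (simp add: algebra_simps)
    ultimately show "\<exists>k\<in>K. \<forall>i\<in>{1..n}. k i \<ge> t*k1 i + (1-t)*k2 i"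
      by (intro bexI[of _ "(\<lambda>i. U i (W i) - U i (Ys i))"]) auto
  next
    fix k assume "k \<in> K"
    then obtain Y where Y: "Y \<in> F" "k = (\<lambda>i. U i (Y i) - U i (Ys i))" unfolding K_def by auto
    show "\<exists>i\<in>{1..n}. k i \<le> 0"
    proof (rule ccontr)
      assume "\<not> ?thesis"
      then have "\<forall>i\<in>{1..n}. U i (Y i) > U i (Ys i)" using Y by auto
      moreover have "1 \<in> {1..n}" using assms(3) by simp
      ultimately show False using nodom Y(1) by (meson less_imp_le)
    qed
  qed
  then obtain l where l: "\<forall>i\<in>{1..n}. 0 \<le> l i" "sum l {1..n} = 1"
    "\<forall>k\<in>K. (\<Sum>i\<in>{1..n}. l i * k i) \<le> 0" by blast
  define l' where "l' = restrict l {1..n}"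
  have "l' \<in> Lambda n"
  proof -
    have "\<exists>i\<in>{1..n}. l i \<noteq> 0"
    proof (rule ccontr)
      assume "\<not> ?thesis"
      then have "sum l {1..n} = 0" by simp
      then show False using l(2) by simp
    qed
    then show ?thesis using l(1) unfolding Lambda_def l'_def by auto
  qed
  moreover have "Ys \<in> CS M n U X l'"
  proof -
    have "(\<Sum>i=1..n. l' i * U i (Y i)) \<le> (\<Sum>i=1..n. l' i * U i (Ys i))" if "Y \<in> F" for Y
    proof -
      have "(\<lambda>i. U i (Y i) - U i (Ys i)) \<in> K" using that K_def by auto
      from bspec[OF l(3) this] have "(\<Sum>i=1..n. l i * (U i (Y i) - U i (Ys i))) \<le> 0" by simp
      then have "(\<Sum>i=1..n. l i * U i (Y i)) - (\<Sum>i=1..n. l i * U i (Ys i)) \<le> 0"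
        by (simp add: right_diff_distrib sum_subtractf)
      then show ?thesis unfolding l'_def by simp
    qed
    then show ?thesis using YsF unfolding CS_def F_def by auto
  qed
  ultimately show "Ys \<in> (\<Union>l\<in>Lambda n. CS M n U X l)" by blast
next
  define F where "F = IR M n U X \<inter> comon_allocations M n X"
  fix Ys assume "Ys \<in> (\<Union>l\<in>Lambda n. CS M n U X l)"
  then obtain l where l: "l \<in> Lambda n" and Ys: "Ys \<in> CS M n U X l" by blast
  have YsF: "Ys \<in> F" using Ys unfolding CS_def F_def by auto
  have opt: "\<forall>Y\<in>F. (\<Sum>i=1..n. l i * U i (Y i)) \<le> (\<Sum>i=1..n. l i * U i (Ys i))"
    using Ys unfolding CS_def F_def by auto
  have lnn: "\<forall>i\<in>{1..n}. 0 \<le> l i" using l unfolding Lambda_def by auto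
  obtain j where j0: "j \<in> {1..n}" "l j \<noteq> 0" using l unfolding Lambda_def by blast
  have j: "j \<in> {1..n}" "l j > 0" using j0 lnn by (auto simp: order_less_le)
  have strict: False if Y: "Y \<in> F" "\<forall>i\<in>{1..n}. U i (Y i) \<ge> U i (Ys i)"
    "j' \<in> {1..n}" "U j' (Y j') > U j' (Ys j')" "l j' > 0" for Y j'
  proof -
    have "(\<Sum>i=1..n. l i * U i (Ys i)) < (\<Sum>i=1..n. l i * U i (Y i))"
    proof (rule sum_strict_mono_ex1)
      show "finite {1..n}" by simp
      show "\<forall>x\<in>{1..n}. l x * U x (Ys x) \<le> l x * U x (Y x)"
        using Y(2) lnn by (auto intro: mult_left_mono)
      show "\<exists>a\<in>{1..n}. l a * U a (Ys a) < l a * U a (Y a)"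
        using Y(3,4,5) by (intro bexI[of _ j']) (auto intro: mult_strict_left_mono)
    qed
    then show False using opt Y(1) by (meson not_le)
  qed
  have "\<not> (\<exists>Y\<in>F. (\<forall>i\<in>{1..n}. U i (Y i) \<ge> U i (Ys i)) \<and> (\<exists>i\<in>{1..n}. U i (Y i) > U i (Ys i)))"
  proof
    assume "\<exists>Y\<in>F. (\<forall>i\<in>{1..n}. U i (Y i) \<ge> U i (Ys i)) \<and> (\<exists>i\<in>{1..n}. U i (Y i) > U i (Ys i))"
    then obtain Y k where Y: "Y \<in> F" "\<forall>i\<in>{1..n}. U i (Y i) \<ge> U i (Ys i)"
      and k: "k \<in> {1..n}" "U k (Y k) > U k (Ys k)" by blast
    show False
    proof (cases "l k > 0")
      case True then show False using strict[OF Y k] by blast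
    next
      case False
      then have jk: "j \<noteq> k" using j by auto
      have YL: "\<forall>i\<in>{1..n}. Y i \<in> Lspace M" and Yag: "aggregate n Y = aggregate n X"
        and Ycom: "comonotone M n Y" and YIR: "\<forall>i\<in>{1..n}. U i (Y i) \<ge> U i (X i)"
        using Y(1) unfolding F_def IR_def comon_allocations_def allocations_def by auto
      have YsIR: "\<forall>i\<in>{1..n}. U i (Ys i) \<ge> U i (X i)"
        using YsF unfolding F_def IR_def by auto
      define f where "f = (\<lambda>c. U k (shift M (Y k) c))"
      have "continuous_on UNIV f" using assms(6) k(1) YL unfolding f_def by blast
      then have "(f \<longlongrightarrow> f 0) (at 0)" by (simp add: continuous_on_def)
      moreover have "f 0 > U k (Ys k)" using k YL shift0 unfolding f_def by metis
      ultimately have "\<forall>\<^sub>F c in at 0. f c > U k (Ys k)" by (rule order_tendstoD(1))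
      then obtain d where d: "d > 0" "\<And>c. c \<noteq> 0 \<Longrightarrow> dist c 0 < d \<Longrightarrow> f c > U k (Ys k)"
        unfolding eventually_at by auto
      define e where "e = d/2"
      have e: "e > 0" "f (-e) > U k (Ys k)" using d unfolding e_def by auto
      define Y' where "Y' = (\<lambda>i. if i \<in> {1..n} then (if i = k then shift M (Y k) (-e)
          else if i = j then shift M (Y j) e else Y i) else undefined)"
      have Y'L: "Y' \<in> {1..n} \<rightarrow>\<^sub>E Lspace M"
      proof (rule PiE_I)
        fix i assume "i \<in> {1..n}"
        then show "Y' i \<in> Lspace M" unfolding Y'_def using YL k(1) j(1)
          by (simp add: Lspace_shift)
      next
        fix i assume "i \<notin> {1..n}"
        then show "Y' i = undefined" unfolding Y'_def by (rule if_not_P)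
      qed
      have sp: "Y' i w = Y i w + (if i = k then -e else if i = j then e else 0)"
        if "i \<in> {1..n}" "w \<in> space M" for i w
        using that unfolding Y'_def shift_def by auto
      have Y'ag: "aggregate n Y' = aggregate n X"
      proof
        fix w
        show "aggregate n Y' w = aggregate n X w"
        proof (cases "w \<in> space M")
          case True
          have "aggregate n Y' w = (\<Sum>i=1..n. Y i w + (if i = k then -e else if i = j then e else 0))"
            unfolding aggregate_def using sp True by simp
          also have "\<dots> = (\<Sum>i=1..n. Y i w) + (\<Sum>i=1..n. (if i = k then -e else if i = j then e else 0))"
            by (simp add: sum.distrib)
          also have "(\<Sum>i=1..n. (if i = k then -e else if i = j then e else 0)) = 
              (\<Sum>i\<in>{1..n}. (if i = k then -e else 0)) + (\<Sum>i\<in>{1..n}. (if i = j then e else 0))"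
            by (subst sum.distrib[symmetric]) (rule sum.cong, use jk in auto)
          also have "\<dots> = 0" using j k by simp
          finally show ?thesis using agg_eq[OF Yag] unfolding aggregate_def by simp
        next
          case False
          have "\<forall>i\<in>{1..n}. Y' i w = 0" using False YL unfolding Y'_def shift_def Lspace_def by auto
          moreover have "\<forall>i\<in>{1..n}. X i w = 0" using False assms(4) unfolding Lspace_def by auto
          ultimately show ?thesis unfolding aggregate_def by simp
        qed
      qed
      have Y'com: "comonotone M n Y'"
        unfolding comonotone_def
      proof (intro ballI)
        fix i i' w1 w2 assume "i \<in> {1..n}" "i' \<in> {1..n}" "w1 \<in> space M" "w2 \<in> space M"
        then show "(Y' i w1 - Y' i w2) * (Y' i' w1 - Y' i' w2) \<ge> 0"
          using sp Ycom unfolding comonotone_def by simp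
      qed
      have mono_j: "U j (Y' j) > U j (Y j)"
      proof -
        have "strict_mono (\<lambda>c. U j (shift M (Y j) c))" using assms(7) j(1) YL by blast
        then have "U j (shift M (Y j) 0) < U j (shift M (Y j) e)" using e(1) by (simp add: strict_mono_def)
        moreover have "shift M (Y j) 0 = Y j" using j(1) YL shift0 by blast
        moreover have "Y' j = shift M (Y j) e" using j(1) jk unfolding Y'_def by simp
        ultimately show ?thesis by simp
      qed
      have Uk: "U k (Y' k) > U k (Ys k)" using e(2) k(1) unfolding Y'_def f_def by auto
      have Y'ge: "\<forall>i\<in>{1..n}. U i (Y' i) \<ge> U i (Ys i)"
      proof
        fix i assume i: "i \<in> {1..n}"
        show "U i (Y' i) \<ge> U i (Ys i)"
        proof (cases "i = k")
          case True then show ?thesis using Uk by simp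
        next
          case nk: False
          show ?thesis
          proof (cases "i = j")
            case True then show ?thesis using mono_j Y(2) j(1) by force
          next
            case False then show ?thesis using nk i Y(2) unfolding Y'_def by auto
          qed
        qed
      qed
      have Y'IR: "\<forall>i\<in>{1..n}. U i (Y' i) \<ge> U i (X i)" using Y'ge YsIR by force
      have Y'F: "Y' \<in> F"
        using Y'L Y'ag Y'IR Y'com unfolding F_def IR_def comon_allocations_def allocations_def by auto
      have "U j (Y' j) > U j (Ys j)" using mono_j Y(2) j(1) by force
      then show False using strict[OF Y'F Y'ge j(1) _ j(2)] by blast
    qed
  qed
  then show "Ys \<in> CPO M n U X" using YsF unfolding CPO_def F_def by auto
qed

end
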